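(* If $n\ge 1$ and $k\ge 2$ are integers, then the diameter of the $k$-Pell graph $\Pi_{n,k}$ is $$\operatorname{diam}(\Pi_{n,k})=nk-\left\lceil \frac{n}{2}\right\rceil.$$
   Context: For an integer $k\ge 2$, a $k$-Pell string is a finite word over the alphabet $\{0,1,\ldots,k-1,kk\}$, i.e. a word over $\{0,1,\ldots,k\}$ in which every maximal run of the letter $k$ has even length. For $n\ge 0$, the $k$-Pell graph $\Pi_{n,k}$ has as vertices all $k$-Pell strings of length $n$, and two vertices are adjacent if one is obtained from the other either by replacing a single letter $i$ by $i+1$ (or vice versa) for some $i\in\{0,1,\ldots,k-2\}$, or by replacing one factor $(k-1)(k-1)$ by $kk$ (or vice versa), in such a way that the resulting string is again a $k$-Pell string. *)

theory Defs
  imports Main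
begin

text \<open>Letters are natural numbers 0..k; the letter k only occurs in maximal runs
 of even length (i.e. words over the alphabet {0,...,k-1,kk}).\<close>

inductive pell_string :: "nat \<Rightarrow> nat list \<Rightarrow> bool" for k where
  nil:  "pell_string k []"
| small: "i < k \<Longrightarrow> pell_string k w \<Longrightarrow> pell_string k (i # w)"
| kk:   "pell_string k w \<Longrightarrow> pell_string k (k # k # w)"

definition pell_vertices :: "nat \<Rightarrow> nat \<Rightarrow> nat list set" where
  "pell_vertices n k = {w. length w = n \<and> pell_string k w}"

definition pell_step :: "nat \<Rightarrow> nat list \<Rightarrow> nat list \<Rightarrow> bool" where
  "pell_step k u v \<longleftrightarrow>
     (\<exists>x y i. i + 2 \<le> k \<and> u = x @ [i] @ y \<and> v = x @ [i + 1] @ y) \<or>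
     (\<exists>x y. u = x @ [k - 1, k - 1] @ y \<and> v = x @ [k, k] @ y)"

definition pell_adj :: "nat \<Rightarrow> nat \<Rightarrow> nat list \<Rightarrow> nat list \<Rightarrow> bool" where
  "pell_adj n k u v \<longleftrightarrow> u \<in> pell_vertices n k \<and> v \<in> pell_vertices n k \<and>
     (pell_step k u v \<or> pell_step k v u)"

fun pell_walk :: "nat \<Rightarrow> nat \<Rightarrow> nat \<Rightarrow> nat list \<Rightarrow> nat list \<Rightarrow> bool" where
  "pell_walk n k 0 u v \<longleftrightarrow> u \<in> pell_vertices n k \<and> u = v"
| "pell_walk n k (Suc m) u v \<longleftrightarrow> (\<exists>w. pell_adj n k u w \<and> pell_walk n k m w v)"

definition pell_dist :: "nat \<Rightarrow> nat \<Rightarrow> nat list \<Rightarrow> nat list \<Rightarrow> nat" where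
  "pell_dist n k u v = (LEAST m. pell_walk n k m u v)"

definition pell_connected :: "nat \<Rightarrow> nat \<Rightarrow> bool" where
  "pell_connected n k \<longleftrightarrow> (\<forall>u\<in>pell_vertices n k. \<forall>v\<in>pell_vertices n k. \<exists>m. pell_walk n k m u v)"

definition pell_diam :: "nat \<Rightarrow> nat \<Rightarrow> nat" where
  "pell_diam n k = Max {pell_dist n k u v | u v. u \<in> pell_vertices n k \<and> v \<in> pell_vertices n k}"

end

theory Submission
  imports Defs
begin

definition pm :: "nat \<Rightarrow> nat \<Rightarrow> nat" where "pm n k = n * k - (n + 1) div 2"

lemma pm_Suc: "k \<ge> 2 \<Longrightarrow> pm n k + k \<le> pm (Suc n) k + 1"
proof -
  assume "k \<ge> 2"
  have a: "n * k \<ge> n" using \<open>k \<ge> 2\<close> by simp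
  have "(n + 1) div 2 \<le> n * k" using a by linarith
  moreover have "Suc n * k \<ge> Suc n" using mult_le_mono2[of 1 k "Suc n"] \<open>k \<ge> 2\<close> by simp
  then have "(Suc n + 1) div 2 \<le> Suc n * k" by (simp only: )
  ultimately show ?thesis unfolding pm_def by simp
qed

lemma pm_SS: "k \<ge> 2 \<Longrightarrow> pm (Suc (Suc n)) k = pm n k + 2 * k - 1"
proof -
  assume "k \<ge> 2"
  have a: "n * k \<ge> n" using \<open>k \<ge> 2\<close> by simp
  have b: "Suc n div 2 \<le> n" by simp
  have c: "Suc (Suc n) * k = n * k + 2 * k" by simp
  have d: "(Suc (Suc n) + 1) div 2 = (n + 1) div 2 + 1" by simp
  show ?thesis unfolding pm_def c d using a b \<open>k \<ge> 2\<close> by linarith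
qed

lemma ps_small: "a < k \<Longrightarrow> pell_string k (a#x) \<longleftrightarrow> pell_string k x"
  by (auto elim: pell_string.cases intro: pell_string.intros)

lemma ps_cons_cases: "pell_string k (a#x) \<Longrightarrow> (a<k \<and> pell_string k x) \<or> (a=k \<and> (\<exists>x'. x = k#x' \<and> pell_string k x'))"
  by (cases rule: pell_string.cases) auto

lemma ps_set: "pell_string k w \<Longrightarrow> set w \<subseteq> {0..k}"
  by (induction rule: pell_string.induct) auto

lemma step_prefix: "pell_step k x y \<Longrightarrow> pell_step k (p@x) (p@y)"
  unfolding pell_step_def
  apply (elim disjE exE)
   apply (rule disjI1)
   apply (metis append.assoc)
  apply (rule disjI2)
  apply (metis append.assoc)
  done

lemma walk_vert: "pell_walk n k m u v \<Longrightarrow> u \<in> pell_vertices n k \<and> v \<in> pell_vertices n k"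
proof (induction m arbitrary: u)
  case 0 then show ?case by auto
next
  case (Suc m) then show ?case by (auto simp: pell_adj_def)
qed

lemma walk_trans: "pell_walk n k a u w \<Longrightarrow> pell_walk n k b w v \<Longrightarrow> pell_walk n k (a+b) u v"
  by (induction a arbitrary: u) auto

lemma walk_one: "pell_adj n k u v \<Longrightarrow> pell_walk n k 1 u v"
  by (auto simp: pell_adj_def)

lemma adj_sym: "pell_adj n k u v \<Longrightarrow> pell_adj n k v u"
  by (auto simp: pell_adj_def)

lemma walk_sym: "pell_walk n k m u v \<Longrightarrow> pell_walk n k m v u"
proof (induction m arbitrary: u)
  case 0 then show ?case by auto
next
  case (Suc m)
  then obtain w where "pell_adj n k u w" "pell_walk n k m w v" by auto
  then have "pell_walk n k m v w" using Suc.IH by auto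
  moreover have "pell_walk n k 1 w u" by (rule walk_one, rule adj_sym, fact)
  ultimately have "pell_walk n k m v w" "pell_walk n k 1 w u" by auto
  from walk_trans[OF this] show ?case by simp
qed

lemma walk_prefix:
  assumes "pell_walk n k m x y" "\<And>z. pell_string k z \<Longrightarrow> pell_string k (p@z)"
  shows "pell_walk (length p + n) k m (p@x) (p@y)"
  using assms(1)
proof (induction m arbitrary: x)
  case 0 then show ?case using assms(2) by (auto simp: pell_vertices_def)
next
  case (Suc m)
  then obtain w where w: "pell_adj n k x w" "pell_walk n k m w y" by auto
  have "pell_adj (length p + n) k (p@x) (p@w)"
    using w(1) assms(2) step_prefix by (auto simp: pell_adj_def pell_vertices_def)
  then show ?case using Suc.IH w(2) by auto
qed

lemma walk_cons: "pell_walk n k m x y \<Longrightarrow> c < k \<Longrightarrow> pell_walk (Suc n) k m (c#x) (c#y)"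
  using walk_prefix[of n k m x y "[c]"] by (simp add: ps_small)

lemma walk_kk: "pell_walk n k m x y \<Longrightarrow> pell_walk (Suc (Suc n)) k m (k#k#x) (k#k#y)"
  using walk_prefix[of n k m x y "[k,k]"] by (simp add: pell_string.kk)

lemma head_adj: "i + 1 < k \<Longrightarrow> pell_string k x \<Longrightarrow> pell_adj (Suc (length x)) k (i#x) (Suc i#x)"
  unfolding pell_adj_def pell_vertices_def pell_step_def
  apply (simp add: ps_small)
  apply (rule disjI1)
  apply (rule exI[of _ "[]"], rule exI[of _ x], rule exI[of _ i])
  by simp

lemma head_walk_up: "a + d < k \<Longrightarrow> pell_string k x \<Longrightarrow> pell_walk (Suc (length x)) k d (a#x) ((a+d)#x)"
proof (induction d)
  case 0 then show ?case by (simp add: pell_vertices_def ps_small)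
next
  case (Suc d)
  then have "pell_walk (Suc (length x)) k d (a#x) ((a+d)#x)" by simp
  moreover have "pell_walk (Suc (length x)) k 1 ((a+d)#x) ((a+Suc d)#x)"
    using head_adj[of "a+d" k x] Suc.prems walk_one by simp
  ultimately show ?case using walk_trans by fastforce
qed

lemma head_walk: "a < k \<Longrightarrow> b < k \<Longrightarrow> pell_string k x \<Longrightarrow> \<exists>m. pell_walk (Suc (length x)) k m (a#x) (b#x) \<and> m < k"
proof (cases "a \<le> b")
  case True
  assume "b < k" "pell_string k x"
  then show ?thesis using head_walk_up[of a "b-a" k x] True by (intro exI[of _ "b-a"]) auto
next
  case False
  assume "a < k" "pell_string k x"
  then show ?thesis using head_walk_up[of b "a-b" k x] False walk_sym by (intro exI[of _ "a-b"]) auto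
qed

lemma kk_adj: "k \<ge> 1 \<Longrightarrow> pell_string k y \<Longrightarrow> pell_adj (Suc (Suc (length y))) k ((k-1)#(k-1)#y) (k#k#y)"
  unfolding pell_adj_def pell_vertices_def pell_step_def
  apply (simp add: ps_small pell_string.kk)
  apply (rule disjI2, rule disjI1)
  apply (rule exI[of _ "[]"], rule exI[of _ y])
  by simp


lemma main:
  assumes k2: "k \<ge> 2"
  shows "(\<forall>u v. u \<in> pell_vertices n k \<longrightarrow> v \<in> pell_vertices n k \<longrightarrow> (\<exists>m. pell_walk n k m u v \<and> m \<le> pm n k)) \<and>
    (\<forall>a x y. a < k \<longrightarrow> a#x \<in> pell_vertices n k \<longrightarrow> k#k#y \<in> pell_vertices n k \<longrightarrow>
       (\<exists>m. pell_walk n k m (a#x) (k#k#y) \<and> m + a \<le> pm n k))"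
proof (induction n rule: less_induct)
  case (less n)
  have IHA: "\<And>j u v. j < n \<Longrightarrow> u \<in> pell_vertices j k \<Longrightarrow> v \<in> pell_vertices j k \<Longrightarrow> \<exists>m. pell_walk j k m u v \<and> m \<le> pm j k"
    using less.IH by blast
  have B: "\<forall>a x y. a < k \<longrightarrow> a#x \<in> pell_vertices n k \<longrightarrow> k#k#y \<in> pell_vertices n k \<longrightarrow>
       (\<exists>m. pell_walk n k m (a#x) (k#k#y) \<and> m + a \<le> pm n k)"
  proof (intro allI impI)
    fix a x y assume a: "a < k" and u: "a#x \<in> pell_vertices n k" and v: "k#k#y \<in> pell_vertices n k"
    from v obtain n' where n: "n = Suc (Suc n')" and ly: "length y = n'"
      by (auto simp: pell_vertices_def)
    have lx: "length x = Suc n'" using u n by (auto simp: pell_vertices_def)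
    have psx: "pell_string k x" using u a ps_small by (auto simp: pell_vertices_def)
    have psy: "pell_string k y" using v by (auto simp: pell_vertices_def elim: pell_string.cases)
    obtain c x' where x: "x = c # x'" using lx by (cases x) auto
    have psx': "pell_string k (c#x')" using psx x by simp
    show "\<exists>m. pell_walk n k m (a#x) (k#k#y) \<and> m + a \<le> pm n k"
    proof (cases "c < k")
      case True
      have px': "pell_string k x'" using psx' True ps_small by blast
      have lx': "length x' = n'" using lx x by simp
      have w1: "pell_walk n k (k-1-a) (a#c#x') ((k-1)#c#x')"
        using head_walk_up[of a "k-1-a" k "c#x'"] a psx' n lx' by simp
      have w2: "pell_walk n k (k-1-c) ((k-1)#c#x') ((k-1)#(k-1)#x')"
        using walk_cons[OF head_walk_up[of c "k-1-c" k x'], of "k-1"] True px' n lx' k2 by simp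
      have "n' < n" using n by simp
      then have IH: "\<forall>u v. u \<in> pell_vertices n' k \<longrightarrow> v \<in> pell_vertices n' k \<longrightarrow> (\<exists>m. pell_walk n' k m u v \<and> m \<le> pm n' k)"
        using less.IH by blast
      have "x' \<in> pell_vertices n' k" "y \<in> pell_vertices n' k" using px' psy lx' ly by (auto simp: pell_vertices_def)
      then obtain m where m: "pell_walk n' k m x' y" "m \<le> pm n' k" using IH by blast
      have w3: "pell_walk n k m ((k-1)#(k-1)#x') ((k-1)#(k-1)#y)"
        using walk_cons[OF walk_cons[OF m(1), of "k-1"], of "k-1"] k2 n by simp
      have w4: "pell_walk n k 1 ((k-1)#(k-1)#y) (k#k#y)"
        using walk_one[OF kk_adj[of k y]] k2 psy n ly by simp
      have "pell_walk n k ((k-1-a) + (k-1-c) + m + 1) (a#x) (k#k#y)"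
        using walk_trans[OF walk_trans[OF walk_trans[OF w1 w2] w3] w4] x by simp
      moreover have "(k-1-a) + (k-1-c) + m + 1 + a \<le> pm n k"
        using pm_SS[OF k2, of n'] n m(2) a k2 by simp
      ultimately show ?thesis by blast
    next
      case False
      then have "c = k" and "\<exists>x''. x' = k # x'' \<and> pell_string k x''"
        using ps_cons_cases[OF psx'] by auto
      then obtain x'' where x'': "x' = k # x''" "pell_string k x''" "c = k" by blast
      have lx'': "Suc (length x'') = n'" using lx x x'' by simp
      have vv: "(k-1)#y \<in> pell_vertices (Suc n') k" using ly psy ps_small[of "k-1" k y] k2
        by (auto simp: pell_vertices_def)
      have uu: "k#k#x'' \<in> pell_vertices (Suc n') k" using lx'' x''(2)
        by (auto simp: pell_vertices_def intro: pell_string.kk)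
      obtain m where m: "pell_walk (Suc n') k m ((k-1)#y) (k#k#x'')" "m + (k-1) \<le> pm (Suc n') k"
      proof -
        have "Suc n' < n" using n by simp
        then have IH: "\<forall>a x y. a < k \<longrightarrow> a#x \<in> pell_vertices (Suc n') k \<longrightarrow> k#k#y \<in> pell_vertices (Suc n') k \<longrightarrow>
          (\<exists>m. pell_walk (Suc n') k m (a#x) (k#k#y) \<and> m + a \<le> pm (Suc n') k)" using less.IH by blast
        have "k - 1 < k" using k2 by simp
        then show ?thesis using IH vv uu that by blast
      qed
      have w1: "pell_walk n k m (a#k#k#x'') (a#(k-1)#y)"
        using walk_cons[OF walk_sym[OF m(1)] a] n by simp
      have w2: "pell_walk n k (k-1-a) (a#(k-1)#y) ((k-1)#(k-1)#y)"
        using head_walk_up[of a "k-1-a" k "(k-1)#y"] a psy ps_small[of "k-1" k y] k2 n ly by simp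
      have w4: "pell_walk n k 1 ((k-1)#(k-1)#y) (k#k#y)"
        using walk_one[OF kk_adj[of k y]] k2 psy n ly by simp
      have "pell_walk n k (m + (k-1-a) + 1) (a#x) (k#k#y)"
        using walk_trans[OF walk_trans[OF w1 w2] w4] x x'' by simp
      moreover have "m + (k-1-a) + 1 + a \<le> pm n k"
        using pm_Suc[OF k2, of "Suc n'"] n m(2) a k2 by simp
      ultimately show ?thesis by blast
    qed
  qed
  have A: "\<forall>u v. u \<in> pell_vertices n k \<longrightarrow> v \<in> pell_vertices n k \<longrightarrow> (\<exists>m. pell_walk n k m u v \<and> m \<le> pm n k)"
  proof (intro allI impI)
    fix u v assume u: "u \<in> pell_vertices n k" and v: "v \<in> pell_vertices n k"
    show "\<exists>m. pell_walk n k m u v \<and> m \<le> pm n k"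
    proof (cases n)
      case 0
      then have "u = []" "v = []" using u v by (auto simp: pell_vertices_def)
      then show ?thesis using u by (intro exI[of _ 0]) auto
    next
      case (Suc n1)
      obtain a x where ux: "u = a # x" using u Suc by (cases u) (auto simp: pell_vertices_def)
      obtain b y where vy: "v = b # y" using v Suc by (cases v) (auto simp: pell_vertices_def)
      have pu: "pell_string k (a#x)" "length x = n1" using u ux Suc by (auto simp: pell_vertices_def)
      have pv: "pell_string k (b#y)" "length y = n1" using v vy Suc by (auto simp: pell_vertices_def)
      show ?thesis
      proof (cases "a < k")
        case ak: True
        show ?thesis
        proof (cases "b < k")
          case bk: True
          have px: "pell_string k x" and py: "pell_string k y" using pu pv ak bk ps_small by blast+
          obtain m1 where m1: "pell_walk n k m1 (a#x) (b#x)" "m1 < k"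
            using head_walk[OF ak bk px] pu Suc by auto
          obtain m2 where m2: "pell_walk n1 k m2 x y" "m2 \<le> pm n1 k"
            using IHA[of n1 x y] Suc px py pu pv by (auto simp: pell_vertices_def)
          have "pell_walk n k (m1 + m2) u v"
            using walk_trans[OF m1(1)[unfolded Suc] walk_cons[OF m2(1) bk]] Suc ux vy by simp
          moreover have "m1 + m2 \<le> pm n k" using pm_Suc[OF k2, of n1] Suc m1(2) m2(2) by simp
          ultimately show ?thesis by blast
        next
          case bk: False
          then obtain y' where "b = k" "y = k # y'" using ps_cons_cases[OF pv(1)] by auto
          then show ?thesis using B ak u v ux vy by fastforce
        qed
      next
        case ak: False
        then obtain x' where x': "a = k" "x = k # x'" "pell_string k x'" using ps_cons_cases[OF pu(1)] by auto
        show ?thesis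
        proof (cases "b < k")
          case bk: True
          then obtain m where "pell_walk n k m v u" "m + b \<le> pm n k" using B u v ux vy x' by fastforce
          then show ?thesis using walk_sym by fastforce
        next
          case bk: False
          then obtain y' where y': "b = k" "y = k # y'" "pell_string k y'" using ps_cons_cases[OF pv(1)] by auto
          obtain n2 where n2: "n1 = Suc n2" using pu x' by (cases n1) auto
          obtain m where m: "pell_walk n2 k m x' y'" "m \<le> pm n2 k"
            using IHA[of n2 x' y'] Suc n2 x' y' pu pv by (auto simp: pell_vertices_def)
          have "pell_walk n k m u v" using walk_kk[OF m(1)] Suc n2 ux vy x' y' by simp
          moreover have "m \<le> pm n k" using pm_SS[OF k2, of n2] Suc n2 m(2) k2 by simp
          ultimately show ?thesis by blast
        qed
      qed
    qed
  qed
  show ?case using A B by blast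
qed


definition phi :: "nat \<Rightarrow> nat \<Rightarrow> nat" where "phi k i = (if i < k then 2 * i else 2 * k - 1)"
definition G :: "nat \<Rightarrow> nat list \<Rightarrow> nat" where "G k w = sum_list (map (phi k) w)"

lemma step_G: "pell_step k u v \<Longrightarrow> k \<ge> 2 \<Longrightarrow> G k v = G k u + 2"
  unfolding pell_step_def G_def
  by (auto simp: phi_def)

lemma walk_G: "pell_walk n k m u v \<Longrightarrow> k \<ge> 2 \<Longrightarrow> G k v \<le> G k u + 2 * m"
proof (induction m arbitrary: u)
  case 0 then show ?case by simp
next
  case (Suc m)
  then obtain w where w: "pell_adj n k u w" "pell_walk n k m w v" by auto
  have "G k w \<le> G k u + 2" using w(1) step_G[of k u w] step_G[of k w u] Suc.prems
    by (auto simp: pell_adj_def)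
  then show ?case using Suc.IH[OF w(2) Suc.prems(2)] by simp
qed

lemma ps_rep: "pell_string k (replicate (2 * j) k)"
proof (induction j)
  case 0 then show ?case by (simp add: pell_string.nil)
next
  case (Suc j)
  have "replicate (2 * Suc j) k = k # k # replicate (2 * j) k" by simp
  then show ?case using Suc pell_string.kk by metis
qed

lemma ps_zero: "k \<ge> 1 \<Longrightarrow> pell_string k (replicate n 0)"
  by (induction n) (auto intro: pell_string.intros)

definition top :: "nat \<Rightarrow> nat \<Rightarrow> nat list" where
  "top n k = (if even n then replicate n k else (k - 1) # replicate (n - 1) k)"

lemma top_vert: "k \<ge> 2 \<Longrightarrow> top n k \<in> pell_vertices n k"
proof (cases "even n")
  case True
  then obtain j where "n = 2 * j" by blast
  then show ?thesis using True ps_rep[of k j] by (simp add: top_def pell_vertices_def)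
next
  case False
  assume k2: "k \<ge> 2"
  then obtain j where j: "n = Suc (2 * j)" using False oddE by fastforce
  have "pell_string k ((k-1) # replicate (2 * j) k)" using ps_rep[of k j] ps_small[of "k-1" k] k2 by simp
  then show ?thesis using False j by (simp add: top_def pell_vertices_def)
qed

lemma G_top: "k \<ge> 2 \<Longrightarrow> G k (top n k) = 2 * pm n k"
proof (cases "even n")
  case True
  assume k2: "k \<ge> 2"
  then obtain j where j: "n = 2 * j" using True by blast
  have "G k (top n k) = 2 * j * (2 * k - 1)" using True j
    by (simp add: top_def G_def phi_def sum_list_replicate)
  also have "\<dots> = 2 * pm n k" unfolding pm_def j using k2
    by (simp add: algebra_simps diff_mult_distrib2)
  finally show ?thesis .
next
  case False
  assume k2: "k \<ge> 2"
  then obtain j where j: "n = Suc (2 * j)" using False oddE by fastforce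
  have "G k (top n k) = 2 * (k - 1) + 2 * j * (2 * k - 1)" using False j k2
    by (simp add: top_def G_def phi_def sum_list_replicate)
  also have "\<dots> = 2 * pm n k"
  proof -
    have h0: "j * 1 \<le> j * k" using k2 by (intro mult_le_mono2) simp
    have h: "j * (k * 4) \<ge> j + j" using h0 by (simp only: mult.assoc[symmetric] mult_1_right)
    show ?thesis unfolding pm_def j using k2 h
      by (simp add: algebra_simps diff_mult_distrib2)
  qed
  finally show ?thesis .
qed

lemma G_zero: "G k (replicate n 0) = 0" if "k \<ge> 1"
  using that by (simp add: G_def phi_def sum_list_replicate)


theorem proposition4p3:
  fixes n k :: nat
  assumes "n \<ge> 1" and "k \<ge> 2"
  shows "pell_connected n k \<and> pell_diam n k = n * k - (n + 1) div 2"
proof -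
  note k2 = assms(2)
  have up: "\<And>u v. u \<in> pell_vertices n k \<Longrightarrow> v \<in> pell_vertices n k \<Longrightarrow> \<exists>m. pell_walk n k m u v \<and> m \<le> pm n k"
    using main[OF k2, of n] by blast
  have conn: "pell_connected n k" unfolding pell_connected_def using up by blast
  define S where "S = {pell_dist n k u v | u v. u \<in> pell_vertices n k \<and> v \<in> pell_vertices n k}"
  have finV: "finite (pell_vertices n k)"
  proof (rule finite_subset)
    show "pell_vertices n k \<subseteq> {xs. set xs \<subseteq> {0..k} \<and> length xs = n}"
      using ps_set by (auto simp: pell_vertices_def)
    show "finite {xs. set xs \<subseteq> {0..k} \<and> length xs = n}"
      by (rule finite_lists_length_eq) simp
  qed
  have "S = (\<lambda>(u, v). pell_dist n k u v) ` (pell_vertices n k \<times> pell_vertices n k)"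
    unfolding S_def by auto
  then have finS: "finite S" using finV by simp
  have le: "\<And>d. d \<in> S \<Longrightarrow> d \<le> pm n k"
  proof -
    fix d assume "d \<in> S"
    then obtain u v where d: "d = pell_dist n k u v" "u \<in> pell_vertices n k" "v \<in> pell_vertices n k"
      unfolding S_def by blast
    obtain m where "pell_walk n k m u v" "m \<le> pm n k" using up d(2,3) by blast
    then show "d \<le> pm n k" unfolding d(1) pell_dist_def by (meson Least_le le_trans)
  qed
  define z where "z = replicate n (0::nat)"
  have zv: "z \<in> pell_vertices n k" using ps_zero[of k n] k2 by (simp add: z_def pell_vertices_def)
  have tv: "top n k \<in> pell_vertices n k" using top_vert[OF k2] .
  obtain m0 where m0: "pell_walk n k m0 z (top n k)" using up zv tv by blast
  have dz: "pell_walk n k (pell_dist n k z (top n k)) z (top n k)"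
    unfolding pell_dist_def by (rule LeastI, rule m0)
  have "2 * pm n k \<le> 2 * pell_dist n k z (top n k)"
    using walk_G[OF dz k2] G_top[OF k2, of n] G_zero[of k n] k2 by (simp add: z_def)
  then have "pm n k \<le> pell_dist n k z (top n k)" by simp
  moreover have "pell_dist n k z (top n k) \<in> S" unfolding S_def using zv tv by blast
  ultimately have "pm n k \<in> S" using le by (metis antisym)
  then have "Max S = pm n k" using finS le by (intro Max_eqI) auto
  then show ?thesis using conn unfolding pell_diam_def S_def pm_def by simp
qed

end
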